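(* Let $1\le r<d$, $D>0$, $m\ge1$, $\mathcal B=\{B\in\mathbb R^{d\times r}:\|B\|_2\le D\}$ and $\mathbf P_{\mathcal X}(\mathcal B)=\{\text{density of }N(0,BB^T+I_d):B\in\mathcal B\}$. Then $$\log N_{[\,]}(\mathbf P_{\mathcal X}(\mathcal B),1/m)\le 4dr\log\big(24mdr(D^2+1)\big).$$
   Context: Bracketing number: for a family $\mathbf P$ of densities on $\mathbb R^d$ and $\epsilon>0$, $N_{[\,]}(\mathbf P,\epsilon)$ is the minimal cardinality of a finite set $\mathbf N$ of nonnegative functions such that for each $p\in\mathbf P$ there is $\bar p\in\mathbf N$ with $\bar p\ge p$ pointwise and $\int(\bar p-p)\,dx\le\epsilon$. *)

theory Defs
  imports "HOL-Analysis.Analysis"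
begin

text \<open>Density of the centred Gaussian N(0, S) on R^d (S symmetric positive definite):
  (2 pi)^(-d/2) det(S)^(-1/2) exp(- x^T S^(-1) x / 2).\<close>
definition gauss_density :: "real^'d^'d \<Rightarrow> real^'d \<Rightarrow> real" where
  "gauss_density S x =
     (2 * pi) powr (- real CARD('d) / 2) * (det S) powr (- 1 / 2)
       * exp (- (x \<bullet> (matrix_inv S *v x)) / 2)"

text \<open>The family of densities of N(0, B B^T + I_d), B ranging over a set of d x r matrices.\<close>
definition gauss_family :: "(real^'r^'d) set \<Rightarrow> (real^'d \<Rightarrow> real) set" where
  "gauss_family BB = {gauss_density (B ** transpose B + mat 1) | B. B \<in> BB}"

text \<open>N is a finite bracketing set at scale eps for the family P: nonnegative (measurable)
  functions, each p in P lies below some element with L1 excess at most eps.\<close>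
definition is_bracketing :: "('a::euclidean_space \<Rightarrow> real) set \<Rightarrow> real \<Rightarrow> ('a \<Rightarrow> real) set \<Rightarrow> bool" where
  "is_bracketing P eps N \<longleftrightarrow> finite N \<and>
     (\<forall>q\<in>N. q \<in> borel_measurable lborel \<and> (\<forall>x. 0 \<le> q x)) \<and>
     (\<forall>p\<in>P. \<exists>q\<in>N. (\<forall>x. p x \<le> q x) \<and>
        (\<integral>\<^sup>+ x. ennreal (q x - p x) \<partial>lborel) \<le> ennreal eps)"

definition bracketing_number :: "('a::euclidean_space \<Rightarrow> real) set \<Rightarrow> real \<Rightarrow> enat" where
  "bracketing_number P eps = Inf ((\<lambda>N. enat (card N)) ` {N. is_bracketing P eps N})"

end

theory Submission
  imports Defs "HOL-Probability.Distributions"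
begin


lemma shear_det_one:
  fixes m n :: "'n::finite"
  assumes "m \<noteq> n"
  shows "det (matrix (\<lambda>v::real^'n. \<chi> i. if i = m then v $ m + v $ n else v $ i)) = 1"
proof -
  have "matrix (\<lambda>v::real^'n. \<chi> i. if i = m then v $ m + v $ n else v $ i)
      = (\<chi> k. if k = m then row m (mat 1) + 1 *s row n (mat 1) else row k (mat 1 :: real^'n^'n))"
    using assms by (auto simp: matrix_def vec_eq_iff row_def mat_def axis_def)
  then show ?thesis using det_row_operation[OF assms, of "mat 1 :: real^'n^'n" 1] by simp
qed

lemma measure_linear_image_fin:
  fixes f :: "real^'n::finite \<Rightarrow> real^'n"
  assumes "linear f" "S \<in> lmeasurable"
  shows "(f ` S) \<in> lmeasurable \<and> measure lebesgue (f ` S) = \<bar>det (matrix f)\<bar> * measure lebesgue S"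
proof -
  let ?Q = "\<lambda>f S. measure lebesgue (f ` S) = \<bar>det (matrix f)\<bar> * measure lebesgue S"
  have "\<forall>S \<in> lmeasurable. (f ` S) \<in> lmeasurable \<and> ?Q f S"
  proof (rule induct_linear_elementary [OF \<open>linear f\<close>]; intro ballI)
    fix f g :: "real^'n \<Rightarrow> real^'n" and S :: "(real,'n) vec set"
    assume "linear f" and "linear g"
      and f [rule_format]: "\<forall>S \<in> lmeasurable. f ` S \<in> lmeasurable \<and> ?Q f S"
      and g [rule_format]: "\<forall>S \<in> lmeasurable. g ` S \<in> lmeasurable \<and> ?Q g S"
      and S: "S \<in> lmeasurable"
    then have gS: "g ` S \<in> lmeasurable"
      by blast
    show "(f \<circ> g) ` S \<in> lmeasurable \<and> ?Q (f \<circ> g) S"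
      using f [OF gS] g [OF S] matrix_compose [OF \<open>linear g\<close> \<open>linear f\<close>]
      by (simp add: o_def image_comp abs_mult det_mul)
  next
    fix f :: "real^'n::_ \<Rightarrow> real^'n::_" and i and S :: "(real^'n::_) set"
    assume "linear f" and 0: "\<And>x. f x $ i = 0" and "S \<in> lmeasurable"
    then have "\<not> inj f"
      by (metis (full_types) linear_injective_imp_surjective one_neq_zero surjE vec_component)
    have detf: "det (matrix f) = 0"
      using \<open>\<not> inj f\<close> det_nz_iff_inj[OF \<open>linear f\<close>] by blast
    show "f ` S \<in> lmeasurable \<and> ?Q f S"
    proof
      show "f ` S \<in> lmeasurable"
        using lmeasurable_iff_indicator_has_integral \<open>linear f\<close> \<open>\<not> inj f\<close> negligible_UNIV negligible_linear_singular_image by blast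
      have "measure lebesgue (f ` S) = 0"
        by (meson \<open>\<not> inj f\<close> \<open>linear f\<close> negligible_imp_measure0 negligible_linear_singular_image)
      also have "\<dots> = \<bar>det (matrix f)\<bar> * measure lebesgue S"
        by (simp add: detf)
      finally show "?Q f S" .
    qed
  next
    fix c and S :: "(real^'n::_) set"
    assume "S \<in> lmeasurable"
    show "(\<lambda>a. \<chi> i. c i * a $ i) ` S \<in> lmeasurable \<and> ?Q (\<lambda>a. \<chi> i. c i * a $ i) S"
    proof
      show "(\<lambda>a. \<chi> i. c i * a $ i) ` S \<in> lmeasurable"
        by (simp add: \<open>S \<in> lmeasurable\<close> measurable_stretch)
      show "?Q (\<lambda>a. \<chi> i. c i * a $ i) S"
        by (simp add: measure_stretch [OF \<open>S \<in> lmeasurable\<close>, of c] axis_def matrix_def det_diagonal)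
    qed
  next
    fix m :: "'n" and n :: "'n" and S :: "(real, 'n) vec set"
    assume "m \<noteq> n" and "S \<in> lmeasurable"
    let ?h = "\<lambda>v::(real, 'n) vec. \<chi> i. v $ Transposition.transpose m n i"
    have lin: "linear ?h"
      by (rule linearI) (simp_all add: plus_vec_def scaleR_vec_def)
    have meq: "measure lebesgue ((\<lambda>v::(real, 'n) vec. \<chi> i. v $ Transposition.transpose m n i) ` cbox a b)
             = measure lebesgue (cbox a b)" for a b
    proof (cases "cbox a b = {}")
      case True then show ?thesis
        by simp
    next
      case False
      then have him: "?h ` (cbox a b) \<noteq> {}"
        by blast
      have eq: "?h ` (cbox a b) = cbox (?h a) (?h b)"
        by (auto simp: image_iff lambda_swap_Galois mem_box_cart) (metis transpose_involutory)+
      show ?thesis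
        using him prod.permute [OF permutes_swap_id, where S=UNIV and g="\<lambda>i. (b - a)$i", symmetric]
        by (simp add: eq content_cbox_cart False)
    qed
    have "(\<chi> i j. if Transposition.transpose m n i = j then 1 else 0) = (\<chi> i j. if j = Transposition.transpose m n i then 1 else (0::real))"
      by (auto intro!: Cart_lambda_cong)
    then have "matrix ?h = transpose(\<chi> i j. mat 1 $ i $ Transposition.transpose m n j)"
      by (auto simp: matrix_eq transpose_def axis_def mat_def matrix_def)
    then have 1: "\<bar>det (matrix ?h)\<bar> = 1"
      by (simp add: det_permute_columns permutes_swap_id sign_swap_id abs_mult)
    show "?h ` S \<in> lmeasurable \<and> ?Q ?h S"
      using measure_linear_sufficient [OF lin \<open>S \<in> lmeasurable\<close>] meq 1 by force
  next
    fix m n :: "'n" and S :: "(real, 'n) vec set"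
    assume "m \<noteq> n" and "S \<in> lmeasurable"
    let ?h = "\<lambda>v::(real, 'n) vec. \<chi> i. if i = m then v $ m + v $ n else v $ i"
    have lin: "linear ?h"
      by (rule linearI) (auto simp: algebra_simps plus_vec_def scaleR_vec_def vec_eq_iff)
    have 1: "det(matrix ?h) = 1"
      using shear_det_one[OF \<open>m \<noteq> n\<close>] .
    have meq: "measure lebesgue (?h ` (cbox a b)) = measure lebesgue (cbox a b)" for a b
    proof (cases "cbox a b = {}")
      case True then show ?thesis by simp
    next
      case False
      then have ne: "(+) (\<chi> i. if i = n then - a $ n else 0) ` cbox a b \<noteq> {}"
        by auto
      let ?v = "\<chi> i. if i = n then - a $ n else 0"
      have "?h ` cbox a b
            = (+) (\<chi> i. if i = m \<or> i = n then a $ n else 0) ` ?h ` (+) ?v ` (cbox a b)"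
        using \<open>m \<noteq> n\<close> unfolding image_comp o_def by (force simp: vec_eq_iff)
      then have "measure lebesgue (?h ` (cbox a b))
               = measure lebesgue ((\<lambda>v. \<chi> i. if i = m then v $ m + v $ n else v $ i) `
                                   (+) ?v ` cbox a b)"
        by (rule ssubst) (rule measure_translation)
      also have "\<dots> = measure lebesgue ((\<lambda>v. \<chi> i. if i = m then v $ m + v $ n else v $ i) ` cbox (?v +a) (?v + b))"
        by (metis (no_types, lifting) cbox_translation)
      also have "\<dots> = measure lebesgue ((+) ?v ` cbox a b)"
        apply (subst measure_shear_interval)
        using \<open>m \<noteq> n\<close> ne apply auto
        apply (simp add: cbox_translation)
        by (metis cbox_borel cbox_translation measure_completion sets_lborel)
      also have "\<dots> = measure lebesgue (cbox a b)"
        by (rule measure_translation)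
        finally show ?thesis .
      qed
    show "?h ` S \<in> lmeasurable \<and> ?Q ?h S"
      using measure_linear_sufficient [OF lin \<open>S \<in> lmeasurable\<close>] meq 1 by force
  qed
  with assms show ?thesis
    by metis
qed



lemma matrix_inv_both:
  fixes A :: "real^'n^'n"
  assumes "invertible A"
  shows "A ** matrix_inv A = mat 1" "matrix_inv A ** A = mat 1"
proof -
  have "\<exists>A'. A ** A' = mat 1 \<and> A' ** A = mat 1" using assms unfolding invertible_def by blast
  then have "A ** matrix_inv A = mat 1 \<and> matrix_inv A ** A = mat 1"
    unfolding matrix_inv_def by (rule someI_ex)
  then show "A ** matrix_inv A = mat 1" "matrix_inv A ** A = mat 1" by auto
qed

lemma matrix_inv_vec:
  fixes A :: "real^'n^'n"
  assumes "invertible A"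
  shows "A *v (matrix_inv A *v x) = x" "matrix_inv A *v (A *v x) = x"
  using matrix_inv_both[OF assms] by (simp_all add: matrix_vector_mul_assoc)

lemma lborel_linear_cov:
  fixes A :: "real^'n^'n" and h :: "real^'n \<Rightarrow> ennreal"
  assumes detA: "det A \<noteq> 0" and hm: "h \<in> borel_measurable borel"
  shows "(\<integral>\<^sup>+x. h x \<partial>lborel) = ennreal \<bar>det A\<bar> * (\<integral>\<^sup>+y. h (A *v y) \<partial>lborel)"
proof -
  have inv: "invertible A" using detA invertible_det_nz by blast
  let ?Ai = "matrix_inv A"
  have linA: "linear ((*v) A)" by (simp add: matrix_vector_mul_linear)
  have mA: "((*v) A) \<in> borel_measurable (borel :: (real^'n) measure)"
    by (intro borel_measurable_continuous_onI linear_continuous_on matrix_vector_mul_bounded_linear)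
  define M where "M = density (distr lborel borel ((*v) A)) (\<lambda>_. ennreal \<bar>det A\<bar>)"
  have detAi: "det ?Ai * det A = 1"
    using matrix_inv_both(2)[OF inv] det_mul[of ?Ai A] by simp
  have "lborel = M"
  proof (rule lborel_eqI)
    fix l u :: "real^'n"
    assume lu: "\<And>b. b \<in> Basis \<Longrightarrow> l \<bullet> b \<le> u \<bullet> b"
    have pre: "(*v) A -` box l u = (*v) ?Ai ` box l u"
      using matrix_inv_vec[OF inv] by (auto simp: image_iff) (metis)
    have bl: "box l u \<in> lmeasurable" by simp
    have li: "linear ((*v) ?Ai)" by (simp add: matrix_vector_mul_linear)
    have ml: "(*v) ?Ai ` box l u \<in> lmeasurable \<and>
        measure lebesgue ((*v) ?Ai ` box l u) = \<bar>det ?Ai\<bar> * measure lebesgue (box l u)"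
      using measure_linear_image_fin[OF li bl] by simp
    have bor: "(*v) A -` box l u \<in> sets lborel"
      using mA by (simp add: measurable_sets_borel)
    have "emeasure M (box l u) = ennreal \<bar>det A\<bar> * emeasure (distr lborel borel ((*v) A)) (box l u)"
      unfolding M_def by (simp add: emeasure_density nn_integral_cmult_indicator)
    also have "emeasure (distr lborel borel ((*v) A)) (box l u) = emeasure lborel ((*v) A -` box l u)"
      using mA by (simp add: emeasure_distr)
    also have "\<dots> = emeasure lebesgue ((*v) ?Ai ` box l u)"
      using bor pre by (simp add: emeasure_completion)
    also have "\<dots> = ennreal (\<bar>det ?Ai\<bar> * measure lebesgue (box l u))"
      using ml by (simp add: emeasure_eq_measure2)
    also have "measure lebesgue (box l u) = (\<Prod>b\<in>Basis. (u - l) \<bullet> b)"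
      using lu by (simp add: measure_lborel_box_eq)
    finally have "emeasure M (box l u) = ennreal \<bar>det A\<bar> * ennreal (\<bar>det ?Ai\<bar> * (\<Prod>b\<in>Basis. (u - l) \<bullet> b))" .
    also have "\<dots> = ennreal (\<bar>det A\<bar> * \<bar>det ?Ai\<bar> * (\<Prod>b\<in>Basis. (u - l) \<bullet> b))"
    proof -
      have pn: "0 \<le> (\<Prod>b\<in>Basis. (u - l) \<bullet> b)"
        using lu by (auto intro!: prod_nonneg simp: inner_diff_left)
      show ?thesis using pn by (simp add: ennreal_mult[symmetric] mult.assoc)
    qed
    also have "\<bar>det A\<bar> * \<bar>det ?Ai\<bar> = 1" using detAi by (simp add: abs_mult[symmetric] mult.commute)
    finally show "emeasure M (box l u) = (\<Prod>b\<in>Basis. (u - l) \<bullet> b)"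
      by simp
  next
    show "sets M = sets borel" by (simp add: M_def)
  qed
  then have "(\<integral>\<^sup>+x. h x \<partial>lborel) = (\<integral>\<^sup>+x. h x \<partial>M)" by simp
  also have "\<dots> = (\<integral>\<^sup>+x. ennreal \<bar>det A\<bar> * h x \<partial>distr lborel borel ((*v) A))"
    unfolding M_def using hm by (simp add: nn_integral_density)
  also have "\<dots> = (\<integral>\<^sup>+y. ennreal \<bar>det A\<bar> * h (A *v y) \<partial>lborel)"
    using hm mA by (simp add: nn_integral_distr)
  also have "\<dots> = ennreal \<bar>det A\<bar> * (\<integral>\<^sup>+y. h (A *v y) \<partial>lborel)"
    using hm mA by (simp add: nn_integral_cmult measurable_compose[OF mA hm])
  finally show ?thesis .
qed



lemma std_gauss_nn:
  "(\<integral>\<^sup>+x. ennreal (std_normal_density x) \<partial>lborel) = 1"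
  by (subst nn_integral_eq_integral) (auto simp: normal_density_nonneg)

lemma std_gauss_Rn:
  "(\<integral>\<^sup>+y. ennreal (exp (- (norm (y::real^'n))\<^sup>2 / 2)) \<partial>lborel) = ennreal (sqrt (2*pi) ^ CARD('n))"
proof -
  let ?K = "sqrt (2*pi) ^ CARD('n)"
  have cB: "card (Basis :: (real^'n) set) = CARD('n)" by simp
  have eq: "ennreal (exp (- (norm y)\<^sup>2 / 2)) = ennreal ?K * (\<Prod>b\<in>Basis. ennreal (std_normal_density (y \<bullet> b)))"
    for y :: "real^'n"
  proof -
    have "(\<Prod>b\<in>Basis. std_normal_density (y \<bullet> b)) = (\<Prod>b\<in>(Basis::(real^'n) set). (1 / sqrt (2 * pi)) * exp (- (y \<bullet> b)\<^sup>2 / 2))"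
      by (simp add: std_normal_density_def)
    also have "\<dots> = (1 / sqrt (2*pi)) ^ CARD('n) * exp (\<Sum>b\<in>(Basis::(real^'n) set). - (y \<bullet> b)\<^sup>2 / 2)"
      by (simp only: prod.distrib exp_sum[OF finite_Basis] prod_constant cB)
    also have "(\<Sum>b\<in>(Basis::(real^'n) set). - (y \<bullet> b)\<^sup>2 / 2) = - (norm y)\<^sup>2 / 2"
    proof -
      have "(norm y)\<^sup>2 = (\<Sum>b\<in>(Basis::(real^'n) set). (y \<bullet> b)\<^sup>2)"
        by (metis (no_types, lifting) power2_norm_eq_inner euclidean_inner power2_eq_square sum.cong)
      then show ?thesis by (simp add: sum_negf sum_divide_distrib)
    qed
    finally have "?K * (\<Prod>b\<in>Basis. std_normal_density (y \<bullet> b)) = exp (- (norm y)\<^sup>2 / 2)"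
      by (simp add: power_one_over[symmetric] power_mult_distrib[symmetric])
    then show ?thesis
      by (simp add: ennreal_mult[symmetric] prod_ennreal normal_density_nonneg prod_nonneg)
  qed
  have "(\<integral>\<^sup>+y. ennreal (exp (- (norm (y::real^'n))\<^sup>2 / 2)) \<partial>lborel)
      = ennreal ?K * (\<integral>\<^sup>+y. (\<Prod>b\<in>Basis. ennreal (std_normal_density (y \<bullet> b))) \<partial>(lborel :: (real^'n) measure))"
    unfolding eq by (rule nn_integral_cmult) auto
  also have "(\<integral>\<^sup>+y. (\<Prod>b\<in>Basis. ennreal (std_normal_density (y \<bullet> b))) \<partial>(lborel :: (real^'n) measure)) = 1"
    by (subst nn_integral_lborel_prod) (auto simp: std_gauss_nn)
  finally show ?thesis by simp
qed



lemma transpose_dot: "(transpose A *v x) \<bullet> y = x \<bullet> (A *v (y::real^'n))" for A :: "real^'n^'m"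
  by (simp add: dot_lmul_matrix)

lemma mat_vec: "mat c *v (y::real^'n) = c *\<^sub>R y"
  unfolding vec_eq_iff matrix_vector_mult_def mat_def
  by (auto simp: if_distrib[of "\<lambda>a. a * b" for b] cong: if_cong)

lemma gram_factor:
  fixes B :: "real^'r^'d" and c :: real
  assumes c: "c > 0"
  obtains L :: "real^'d^'d" where
    "\<And>x y. (L *v x) \<bullet> (L *v y) = x \<bullet> ((B ** transpose B + mat c) *v y)"
    "det L \<noteq> 0"
proof -
  define \<phi> where "\<phi> = (\<lambda>x::real^'d. (transpose B *v x, sqrt c *\<^sub>R x))"
  have lin: "linear \<phi>"
    unfolding \<phi>_def by (rule linearI) (auto simp: matrix_vector_right_distrib matrix_vector_mult_scaleR scaleR_add_right)
  have inj: "inj \<phi>"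
    unfolding \<phi>_def inj_def using c by auto
  have sub: "subspace (range \<phi>)"
    using lin by (simp add: linear_subspace_image)
  have dimeq: "dim (range \<phi>) = dim (UNIV :: (real^'d) set)"
    using dim_image_eq[OF lin, of UNIV] inj by (simp add: inj_on_def inj_def)
  obtain f where f: "linear f" "f ` range \<phi> = (UNIV :: (real^'d) set)"
    "\<And>x. x \<in> range \<phi> \<Longrightarrow> norm (f x) = norm x"
    using isometry_subspaces[OF sub subspace_UNIV dimeq] by blast
  define g where "g = f \<circ> \<phi>"
  have ling: "linear g" unfolding g_def using f(1) lin by (simp add: linear_compose)
  have ng: "norm (g x) = norm (\<phi> x)" for x unfolding g_def using f(3) by auto
  have phidot: "\<phi> x \<bullet> \<phi> y = x \<bullet> ((B ** transpose B + mat c) *v y)" for x y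
  proof -
    have "\<phi> x \<bullet> \<phi> y = (transpose B *v x) \<bullet> (transpose B *v y) + c * (x \<bullet> y)"
      unfolding \<phi>_def using c by (simp add: inner_Pair_0 inner_prod_def)
    also have "(transpose B *v x) \<bullet> (transpose B *v y) = x \<bullet> ((B ** transpose B) *v y)"
      using transpose_dot[of B x "transpose B *v y"] matrix_vector_mul_assoc[of B "transpose B" y] by simp
    finally show ?thesis
      by (simp add: matrix_vector_mult_add_rdistrib inner_add_right mat_vec)
  qed
  have gdot: "g x \<bullet> g y = \<phi> x \<bullet> \<phi> y" for x y
  proof -
    have "g x \<bullet> g y = ((norm (g (x + y)))\<^sup>2 - (norm (g x))\<^sup>2 - (norm (g y))\<^sup>2) / 2"
      using dot_norm[of "g x" "g y"] ling by (simp add: linear_add)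
    also have "\<dots> = ((norm (\<phi> (x + y)))\<^sup>2 - (norm (\<phi> x))\<^sup>2 - (norm (\<phi> y))\<^sup>2) / 2"
      by (simp add: ng)
    also have "\<dots> = \<phi> x \<bullet> \<phi> y"
      using dot_norm[of "\<phi> x" "\<phi> y"] lin by (simp add: linear_add)
    finally show ?thesis .
  qed
  define L where "L = matrix g"
  have Lg: "L *v x = g x" for x unfolding L_def using ling by (simp add: matrix_works)
  have 1: "(L *v x) \<bullet> (L *v y) = x \<bullet> ((B ** transpose B + mat c) *v y)" for x y
    by (simp add: Lg gdot phidot)
  have "inj g"
  proof (rule linear_injective_0[OF ling, THEN iffD2], intro allI impI)
    fix x assume "g x = 0"
    then have "\<phi> x \<bullet> \<phi> x = 0" using gdot[of x x] by simp
    then have "\<phi> x = 0" by simp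
    then show "x = 0" unfolding \<phi>_def using c by (simp add: zero_prod_def)
  qed
  then have "det L \<noteq> 0" unfolding L_def using det_nz_iff_inj[OF ling] by simp
  then show ?thesis using that 1 by blast
qed



lemma quad_cont: "continuous_on UNIV (\<lambda>x::real^'n. x \<bullet> (M *v x))"
  by (intro continuous_intros continuous_on_id linear_continuous_on matrix_vector_mul_bounded_linear)

lemma quad_meas: "(\<lambda>x::real^'n. f (x \<bullet> (M *v x))) \<in> borel_measurable borel" if "continuous_on UNIV f" for f :: "real \<Rightarrow> real"
proof -
  have "continuous_on UNIV (f \<circ> (\<lambda>x::real^'n. x \<bullet> (M *v x)))"
    by (rule continuous_on_compose[OF quad_cont]) (use that in \<open>auto intro: continuous_on_subset\<close>)
  then show ?thesis by (simp add: borel_measurable_continuous_onI o_def)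
qed

lemma Zform:
  fixes B :: "real^'r^'d" and c :: real
  assumes c: "c > 0" and S: "S = B ** transpose B + mat c"
  shows "invertible S" "det S > 0"
    "(\<integral>\<^sup>+x. ennreal (exp (- (x \<bullet> (matrix_inv S *v x)) / 2)) \<partial>lborel)
       = ennreal (sqrt (2*pi) ^ CARD('d) * sqrt (det S))"
proof -
  obtain L :: "real^'d^'d" where L: "\<And>x y. (L *v x) \<bullet> (L *v y) = x \<bullet> (S *v y)" "det L \<noteq> 0"
    using gram_factor[OF c, of B] S by metis
  have tl: "x \<bullet> (transpose L *v w) = (L *v x) \<bullet> w" for x w
    using transpose_dot[of L w x] by (simp add: inner_commute)
  have LL: "transpose L ** L = S"
  proof (subst matrix_eq, intro allI)
    fix y
    define v where "v = (transpose L ** L) *v y - S *v y"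
    have "v \<bullet> v = v \<bullet> (transpose L *v (L *v y)) - v \<bullet> (S *v y)"
      unfolding v_def by (simp add: inner_diff_right matrix_vector_mul_assoc)
    also have "\<dots> = 0" by (simp only: tl L(1) diff_self)
    finally have "v = 0" by simp
    then show "(transpose L ** L) *v y = S *v y" unfolding v_def by simp
  qed
  have detS: "det S = (det L)\<^sup>2"
    using LL det_mul[of "transpose L" L] by (simp add: power2_eq_square)
  then show dpos: "det S > 0" using L(2) by simp
  then show invS: "invertible S" using invertible_det_nz by force
  have invL: "invertible L" using L(2) invertible_det_nz by blast
  let ?Li = "matrix_inv L"
  have key: "(transpose L *v y) \<bullet> (matrix_inv S *v (transpose L *v y)) = y \<bullet> y" for y
  proof -
    have "S *v (?Li *v y) = transpose L *v y"
      using LL matrix_inv_vec[OF invL] by (metis matrix_vector_mul_assoc)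
    then have "matrix_inv S *v (transpose L *v y) = ?Li *v y"
      using matrix_inv_vec(2)[OF invS, of "?Li *v y"] by simp
    then show ?thesis
      using transpose_dot[of L y "?Li *v y"] matrix_inv_vec(1)[OF invL, of y] by simp
  qed
  have hm: "(\<lambda>x::real^'d. ennreal (exp (- (x \<bullet> (matrix_inv S *v x)) / 2))) \<in> borel_measurable borel"
  proof -
    have "(\<lambda>x::real^'d. exp (- (x \<bullet> (matrix_inv S *v x)) / 2)) \<in> borel_measurable borel"
      by (rule quad_meas[of "\<lambda>t. exp (- t / 2)"]) (intro continuous_intros, auto)
    then show ?thesis by measurable
  qed
  have dT: "det (transpose L) \<noteq> 0" using L(2) by simp
  have "(\<integral>\<^sup>+x. ennreal (exp (- (x \<bullet> (matrix_inv S *v x)) / 2)) \<partial>lborel)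
      = ennreal \<bar>det (transpose L)\<bar> * (\<integral>\<^sup>+y. ennreal (exp (- ((transpose L *v y) \<bullet> (matrix_inv S *v (transpose L *v y))) / 2)) \<partial>lborel)"
    by (rule lborel_linear_cov[OF dT hm])
  also have "(\<integral>\<^sup>+y. ennreal (exp (- ((transpose L *v y) \<bullet> (matrix_inv S *v (transpose L *v y))) / 2)) \<partial>lborel)
      = (\<integral>\<^sup>+y. ennreal (exp (- (norm (y::real^'d))\<^sup>2 / 2)) \<partial>lborel)"
  proof -
    have key': "(y v* L) \<bullet> (matrix_inv S *v (y v* L)) = y \<bullet> y" for y
      using key[of y] by simp
    show ?thesis by (simp add: key' power2_norm_eq_inner)
  qed
  also have "\<dots> = ennreal (sqrt (2*pi) ^ CARD('d))" by (rule std_gauss_Rn)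
  also have "\<bar>det (transpose L)\<bar> = sqrt (det S)" using detS by simp
  finally show "(\<integral>\<^sup>+x. ennreal (exp (- (x \<bullet> (matrix_inv S *v x)) / 2)) \<partial>lborel)
       = ennreal (sqrt (2*pi) ^ CARD('d) * sqrt (det S))"
    using dpos by (simp add: ennreal_mult[symmetric] mult.commute)
qed



lemma transpose_plus: "transpose (A + C) = transpose A + transpose (C :: real^'n^'m)"
  by (simp add: transpose_def vec_eq_iff)

lemma S_sym: "transpose (B ** transpose B + mat c) = B ** transpose B + (mat c :: real^'d^'d)"
  for B :: "real^'r^'d"
  by (simp add: transpose_plus matrix_transpose_mul)

lemma sym_dot: "transpose S = S \<Longrightarrow> (S *v a) \<bullet> b = a \<bullet> (S *v (b::real^'n))"
  using transpose_dot[of S a b] by (metis transpose_transpose)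

lemma quadform:
  fixes B :: "real^'r^'d"
  shows "y \<bullet> ((B ** transpose B + mat c) *v y) = (norm (transpose B *v y))\<^sup>2 + c * (norm y)\<^sup>2"
proof -
  have "y \<bullet> ((B ** transpose B) *v y) = (transpose B *v y) \<bullet> (transpose B *v y)"
    using transpose_dot[of B y "transpose B *v y"] matrix_vector_mul_assoc[of B "transpose B" y] by simp
  then show ?thesis
    by (simp add: matrix_vector_mult_add_rdistrib inner_add_right mat_vec power2_norm_eq_inner)
qed

lemma inv_mono:
  fixes S T :: "real^'n^'n"
  assumes sS: "transpose S = S" and iS: "invertible S" and iT: "invertible T"
    and psd: "\<And>y. 0 \<le> y \<bullet> (S *v y)"
    and le: "\<And>y. y \<bullet> (S *v y) \<le> y \<bullet> (T *v y)"
  shows "x \<bullet> (matrix_inv T *v x) \<le> x \<bullet> (matrix_inv S *v x)"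
proof -
  define w where "w = matrix_inv S *v x"
  define z where "z = matrix_inv T *v x"
  have Sw: "S *v w = x" unfolding w_def using matrix_inv_vec[OF iS] by simp
  have Tz: "T *v z = x" unfolding z_def using matrix_inv_vec[OF iT] by simp
  have "0 \<le> (z - w) \<bullet> (S *v (z - w))" by (rule psd)
  also have "\<dots> = z \<bullet> (S *v z) - 2 * (z \<bullet> x) + w \<bullet> x"
  proof -
    have "w \<bullet> (S *v z) = (S *v w) \<bullet> z" using sym_dot[OF sS, of w z] by simp
    then show ?thesis
      by (simp add: matrix_vector_mult_diff_distrib inner_diff_left inner_diff_right Sw inner_commute)
  qed
  also have "z \<bullet> (S *v z) \<le> z \<bullet> x" using le[of z] Tz by simp
  finally have "z \<bullet> x \<le> w \<bullet> x" by simp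
  then show ?thesis unfolding w_def z_def by (simp add: inner_commute)
qed

lemma entry_bound:
  fixes B :: "real^'r^'d"
  assumes "onorm (\<lambda>x. B *v x) \<le> D"
  shows "\<bar>B $ i $ j\<bar> \<le> D"
proof -
  have "B $ i $ j = (B *v axis j 1) $ i"
    by (simp add: matrix_vector_mult_def axis_def if_distrib[of "\<lambda>a. b * a" for b] cong: if_cong)
  also have "\<bar>\<dots>\<bar> \<le> norm (B *v axis j 1)" by (rule component_le_norm_cart)
  also have "\<dots> \<le> onorm (\<lambda>x. B *v x) * norm (axis j (1::real))"
    by (rule onorm) (rule matrix_vector_mul_bounded_linear)
  also have "\<dots> \<le> D" using assms by simp
  finally show ?thesis .
qed

lemma transpose_bound:
  fixes B :: "real^'r^'d"
  assumes "onorm (\<lambda>x. B *v x) \<le> D"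
  shows "norm (transpose B *v y) \<le> D * norm y"
proof (cases "norm (transpose B *v y) = 0")
  case True then show ?thesis
    using assms onorm_pos_le[OF matrix_vector_mul_bounded_linear, of B] by simp
next
  case False
  let ?v = "transpose B *v y"
  have "(norm ?v)\<^sup>2 = y \<bullet> (B *v ?v)"
    using transpose_dot[of B y ?v] by (simp add: power2_norm_eq_inner)
  also have "\<dots> \<le> norm y * norm (B *v ?v)" by (rule norm_cauchy_schwarz)
  also have "\<dots> \<le> norm y * (D * norm ?v)"
  proof -
    have "norm (B *v ?v) \<le> D * norm ?v"
      using onorm[OF matrix_vector_mul_bounded_linear, of B ?v] mult_right_mono[OF assms norm_ge_zero[of ?v]]
      by linarith
    then show ?thesis by (intro mult_left_mono) auto
  qed
  finally have "norm ?v * norm ?v \<le> (D * norm y) * norm ?v"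
    by (simp add: power2_eq_square mult_ac)
  then show ?thesis using False by simp
qed

lemma small_transpose_bound:
  fixes M :: "real^'r^'d"
  assumes "\<And>i j. \<bar>M $ i $ j\<bar> \<le> h"
  shows "norm (transpose M *v y) \<le> real CARD('r) * real CARD('d) * h * norm y"
proof -
  have comp: "\<bar>(transpose M *v y) $ j\<bar> \<le> real CARD('d) * h * norm y" for j
  proof -
    have "(transpose M *v y) $ j = (\<Sum>i\<in>UNIV. M $ i $ j * y $ i)"
      by (simp add: matrix_vector_mult_def transpose_def)
    also have "\<bar>\<dots>\<bar> \<le> (\<Sum>i\<in>UNIV. \<bar>M $ i $ j * y $ i\<bar>)" by (rule sum_abs)
    also have "\<dots> \<le> (\<Sum>i\<in>(UNIV::'d set). h * norm y)"
      by (intro sum_mono) (auto simp: abs_mult intro!: mult_mono assms component_le_norm_cart order_trans[OF abs_ge_zero assms])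
    finally show ?thesis by simp
  qed
  have "norm (transpose M *v y) \<le> (\<Sum>j\<in>UNIV. \<bar>(transpose M *v y) $ j\<bar>)" by (rule norm_le_l1_cart)
  also have "\<dots> \<le> (\<Sum>j\<in>(UNIV::'r set). real CARD('d) * h * norm y)" by (intro sum_mono comp)
  finally show ?thesis by (simp add: mult_ac)
qed

lemma scaled_S:
  fixes B :: "real^'r^'d" and a :: real
  assumes a: "a > 0"
  shows "det ((sqrt a *\<^sub>R B) ** transpose (sqrt a *\<^sub>R B) + mat a) = a ^ CARD('d) * det (B ** transpose B + mat 1)"
proof -
  have "(sqrt a *\<^sub>R B) ** transpose (sqrt a *\<^sub>R B) + mat a = matrix ((*\<^sub>R) a) ** (B ** transpose B + mat 1)"
  proof (subst matrix_eq, intro allI)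
    fix y :: "real^'d"
    have lin: "linear ((*\<^sub>R) a :: real^'d \<Rightarrow> real^'d)" by (simp add: linear_scaleR)
    have h1: "((sqrt a *\<^sub>R B) ** transpose (sqrt a *\<^sub>R B) + mat a) *v y = a *\<^sub>R ((B ** transpose B + mat 1) *v y)"
    proof -
      have eqM: "(sqrt a *\<^sub>R B) ** transpose (sqrt a *\<^sub>R B) = a *\<^sub>R (B ** transpose B)"
        using a by (simp add: matrix_matrix_mult_def transpose_scalar vec_eq_iff sum_distrib_left mult_ac)
           (simp add: mult.assoc[symmetric])
      show ?thesis unfolding eqM
        by (simp add: matrix_vector_mult_add_rdistrib mat_vec scaleR_matrix_vector_assoc[symmetric] scaleR_add_right)
    qed
    then show "((sqrt a *\<^sub>R B) ** transpose (sqrt a *\<^sub>R B) + mat a) *v y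
        = (matrix ((*\<^sub>R) a) ** (B ** transpose B + mat 1)) *v y"
    proof -
      have mw: "matrix ((*\<^sub>R) a) *v z = a *\<^sub>R z" for z :: "real^'d"
        using fun_cong[OF matrix_vector_mul(2)[OF lin], of z] by simp
      show ?thesis using h1 by (simp add: matrix_vector_mul_assoc[symmetric] mw)
    qed
  qed
  then show ?thesis by (simp add: det_mul)
qed



lemma pow_half: "(2*pi) powr (- real n / 2) = 1 / sqrt (2*pi) ^ n"
proof -
  have "sqrt (2*pi) ^ n = (2*pi) powr (real n / 2)"
    by (simp add: powr_half_sqrt[symmetric] powr_realpow[symmetric] powr_powr)
  then show ?thesis by (simp add: powr_minus_divide)
qed

lemma det_half: "x > 0 \<Longrightarrow> x powr (- 1 / 2) = 1 / sqrt x"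
  by (simp add: powr_minus_divide powr_half_sqrt)

lemma gd_eq:
  fixes S :: "real^'d^'d"
  assumes "det S > 0"
  shows "gauss_density S x = 1 / (sqrt (2*pi) ^ CARD('d) * sqrt (det S)) * exp (- (x \<bullet> (matrix_inv S *v x)) / 2)"
  unfolding gauss_density_def pow_half det_half[OF assms] by simp

lemma gd_meas: "gauss_density (S::real^'d^'d) \<in> borel_measurable borel"
proof -
  have "(\<lambda>x::real^'d. (\<lambda>t. (2 * pi) powr (- real CARD('d) / 2) * det S powr (- 1 / 2) * exp (- t / 2)) (x \<bullet> (matrix_inv S *v x))) \<in> borel_measurable borel"
    by (rule quad_meas) (intro continuous_intros, auto)
  then show ?thesis unfolding gauss_density_def[abs_def] by (simp only:)
qed

lemma gd_nonneg: "0 \<le> gauss_density S x"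
  unfolding gauss_density_def by simp

lemma gd_int:
  fixes B :: "real^'r^'d" and c :: real
  assumes c: "c > 0" and S: "S = B ** transpose B + mat c"
  shows "(\<integral>\<^sup>+x. ennreal (gauss_density S x) \<partial>lborel) = 1"
proof -
  have dp: "det S > 0" using Zform[OF c S] by simp
  define K where "K = sqrt (2*pi) ^ CARD('d) * sqrt (det S)"
  have Kp: "K > 0" using dp by (simp add: K_def)
  have "(\<integral>\<^sup>+x. ennreal (gauss_density S x) \<partial>lborel)
     = (\<integral>\<^sup>+x. ennreal (1 / K) * ennreal (exp (- (x \<bullet> (matrix_inv S *v x)) / 2)) \<partial>lborel)"
    using Kp by (simp add: gd_eq[OF dp] ennreal_mult[symmetric] K_def)
  also have "\<dots> = ennreal (1 / K) * (\<integral>\<^sup>+x. ennreal (exp (- (x \<bullet> (matrix_inv S *v x)) / 2)) \<partial>lborel)"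
  proof (rule nn_integral_cmult)
    have "(\<lambda>x::real^'d. exp (- (x \<bullet> (matrix_inv S *v x)) / 2)) \<in> borel_measurable borel"
      by (rule quad_meas[of "\<lambda>t. exp (- t / 2)"]) (intro continuous_intros, auto)
    then show "(\<lambda>x. ennreal (exp (- (x \<bullet> (matrix_inv S *v x)) / 2))) \<in> borel_measurable lborel"
      by measurable
  qed
  also have "\<dots> = ennreal (1 / K) * ennreal K" using Zform(3)[OF c S] by (simp add: K_def)
  also have "\<dots> = ennreal (1 / K * K)" using Kp by (subst ennreal_mult[symmetric]) auto
  also have "1 / K * K = 1" using Kp by simp
  finally show ?thesis by simp
qed



lemma transpose_minus: "transpose (A - C) = transpose A - transpose (C :: real^'n^'m)"
  by (simp add: transpose_def vec_eq_iff)

lemma quad_ineqs: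
  fixes a b n D \<delta> \<theta> :: real
  assumes "0 \<le> a" "0 \<le> b" "0 \<le> n" "a \<le> b + \<delta> * n" "b \<le> a + \<delta> * n" "a \<le> D * n"
    "0 \<le> \<delta>" "\<delta> \<le> 1" "\<delta> * (2 * D + 3) \<le> \<theta>" "0 < D"
  shows "a\<^sup>2 + n\<^sup>2 \<le> b\<^sup>2 + (1 + \<theta>) * n\<^sup>2" "b\<^sup>2 + (1 + \<theta>) * n\<^sup>2 \<le> (1 + 2*\<theta>) * (a\<^sup>2 + n\<^sup>2)"
proof -
  have t0: "0 \<le> \<theta>" using assms by (smt (verit) mult_nonneg_nonneg)
  have dn: "0 \<le> \<delta> * n" using assms by simp
  have F1: "a * a \<le> (b + \<delta> * n) * (b + \<delta> * n)" using assms by (intro mult_mono) auto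
  have F1': "b * b \<le> (a + \<delta> * n) * (a + \<delta> * n)" using assms by (intro mult_mono) auto
  have F2: "(\<delta> * n) * b \<le> (\<delta> * n) * ((D + \<delta>) * n)" using assms dn
    by (intro mult_left_mono) (auto simp: algebra_simps)
  have F2': "(\<delta> * n) * a \<le> (\<delta> * n) * (D * n)" using assms dn
    by (intro mult_left_mono) (auto simp: algebra_simps)
  have F3: "(\<delta> * \<delta>) * (n * n) \<le> \<delta> * (n * n)"
    using mult_left_le[of \<delta> \<delta>] assms by (intro mult_right_mono) auto
  have F4: "(\<delta> * (2 * D + 3)) * (n * n) \<le> \<theta> * (n * n)"
    using assms by (intro mult_right_mono) auto
  have e1: "(b + \<delta> * n) * (b + \<delta> * n) = b * b + 2 * ((\<delta> * n) * b) + (\<delta> * \<delta>) * (n * n)"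
    by (simp add: algebra_simps)
  have e1': "(a + \<delta> * n) * (a + \<delta> * n) = a * a + 2 * ((\<delta> * n) * a) + (\<delta> * \<delta>) * (n * n)"
    by (simp add: algebra_simps)
  have e2: "(\<delta> * n) * ((D + \<delta>) * n) = \<delta> * D * (n * n) + (\<delta> * \<delta>) * (n * n)"
    by (simp add: algebra_simps)
  have e2': "(\<delta> * n) * (D * n) = \<delta> * D * (n * n)"
    by (simp add: algebra_simps)
  have e4: "(\<delta> * (2 * D + 3)) * (n * n) = 2 * (\<delta> * D * (n * n)) + 3 * (\<delta> * (n * n))"
    by (simp add: algebra_simps)
  have G1: "a * a \<le> b * b + \<theta> * (n * n)"
    using F1 F2 F3 F4 e1 e2 e4 by linarith
  have G2: "b * b \<le> a * a + \<theta> * (n * n)"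
    using F1' F2' F3 F4 e1' e2' e4 mult_nonneg_nonneg[OF assms(7) mult_nonneg_nonneg[OF assms(3) assms(3)]] by linarith
  have G3: "0 \<le> \<theta> * (a * a)" using t0 by simp
  show "a\<^sup>2 + n\<^sup>2 \<le> b\<^sup>2 + (1 + \<theta>) * n\<^sup>2"
    using G1 by (simp add: power2_eq_square algebra_simps)
  show "b\<^sup>2 + (1 + \<theta>) * n\<^sup>2 \<le> (1 + 2*\<theta>) * (a\<^sup>2 + n\<^sup>2)"
    using G2 G3 by (simp add: power2_eq_square algebra_simps)
qed



lemma bracket_one:
  fixes B B0 :: "real^'r^'d" and D \<delta> \<theta> :: real
  assumes onB: "onorm (\<lambda>x. B *v x) \<le> D" and Dp: "0 < D"
    and diff: "\<And>y. norm (transpose (B - B0) *v y) \<le> \<delta> * norm y"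
    and d0: "0 \<le> \<delta>" and d1: "\<delta> \<le> 1" and dt: "\<delta> * (2*D + 3) \<le> \<theta>"
  shows "\<And>x. gauss_density (B ** transpose B + mat 1) x
          \<le> (1+2*\<theta>)^CARD('d) * gauss_density (B0 ** transpose B0 + mat (1+\<theta>)) x"
   and "(\<integral>\<^sup>+x. ennreal ((1+2*\<theta>)^CARD('d) * gauss_density (B0 ** transpose B0 + mat (1+\<theta>)) x
            - gauss_density (B ** transpose B + mat 1) x) \<partial>lborel) = ennreal ((1+2*\<theta>)^CARD('d) - 1)"
proof -
  have t0: "0 \<le> \<theta>" using dt d0 Dp by (smt (verit) mult_nonneg_nonneg)
  define a' where "a' = 1 + 2 * \<theta>"
  have a'1: "1 \<le> a'" using t0 by (simp add: a'_def)
  define S where "S = B ** transpose B + mat 1"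
  define T where "T = B0 ** transpose B0 + mat (1 + \<theta>)"
  define B1 where "B1 = sqrt a' *\<^sub>R B"
  define S' where "S' = B1 ** transpose B1 + mat a'"
  have c1: "(0::real) < 1" and c2: "0 < 1 + \<theta>" and c3: "0 < a'" using t0 a'1 by auto
  note ZS = Zform[OF c1 S_def] and ZT = Zform[OF c2 T_def] and ZS' = Zform[OF c3 S'_def]
  have qS: "y \<bullet> (S *v y) = (norm (transpose B *v y))\<^sup>2 + (norm y)\<^sup>2" for y
    unfolding S_def by (simp add: quadform)
  have qT: "y \<bullet> (T *v y) = (norm (transpose B0 *v y))\<^sup>2 + (1 + \<theta>) * (norm y)\<^sup>2" for y
    unfolding T_def by (simp add: quadform)
  have qS': "y \<bullet> (S' *v y) = a' * (norm (transpose B *v y))\<^sup>2 + a' * (norm y)\<^sup>2" for y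
  proof -
    have "transpose B1 *v y = sqrt a' *\<^sub>R (transpose B *v y)"
      unfolding B1_def transpose_scalar by (rule scaleR_matrix_vector_assoc[symmetric])
    then have "(norm (transpose B1 *v y))\<^sup>2 = a' * (norm (transpose B *v y))\<^sup>2"
      using c3 by (simp add: power_mult_distrib)
    then show ?thesis unfolding S'_def by (simp add: quadform)
  qed
  have ab: "norm (transpose B *v y) \<le> norm (transpose B0 *v y) + \<delta> * norm y \<and>
            norm (transpose B0 *v y) \<le> norm (transpose B *v y) + \<delta> * norm y" for y
  proof -
    have e: "transpose B0 *v y = transpose B *v y - transpose (B - B0) *v y"
      by (simp add: transpose_minus matrix_vector_mult_diff_rdistrib)
    show ?thesis
      using diff[of y] norm_triangle_ineq4[of "transpose B *v y" "transpose (B - B0) *v y"]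
        norm_triangle_ineq[of "transpose B0 *v y" "transpose (B - B0) *v y"]
      unfolding e by (auto simp: algebra_simps)
  qed
  have le1: "y \<bullet> (S *v y) \<le> y \<bullet> (T *v y)" and le2: "y \<bullet> (T *v y) \<le> y \<bullet> (S' *v y)" for y
  proof -
    note qi = quad_ineqs[of "norm (transpose B *v y)" "norm (transpose B0 *v y)" "norm y" \<delta> D \<theta>]
    have h: "norm (transpose B *v y) \<le> D * norm y" by (rule transpose_bound[OF onB])
    have pre: "0 \<le> norm (transpose B *v y)" "0 \<le> norm (transpose B0 *v y)" "0 \<le> norm y"
      "norm (transpose B *v y) \<le> norm (transpose B0 *v y) + \<delta> * norm y"
      "norm (transpose B0 *v y) \<le> norm (transpose B *v y) + \<delta> * norm y"
      using ab[of y] by auto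
    note q1 = qi(1)[OF pre h d0 d1 dt Dp] and q2 = qi(2)[OF pre h d0 d1 dt Dp]
    show "y \<bullet> (S *v y) \<le> y \<bullet> (T *v y)" unfolding qS qT by (rule q1)
    have "(1 + 2 * \<theta>) * ((norm (transpose B *v y))\<^sup>2 + (norm y)\<^sup>2)
       = a' * (norm (transpose B *v y))\<^sup>2 + a' * (norm y)\<^sup>2" unfolding a'_def by (rule distrib_left)
    then show "y \<bullet> (T *v y) \<le> y \<bullet> (S' *v y)" unfolding qT qS' using q2 by linarith
  qed
  have psdS: "0 \<le> y \<bullet> (S *v y)" for y unfolding qS by simp
  have psdT: "0 \<le> y \<bullet> (T *v y)" for y unfolding qT using t0 by simp
  have QTS: "x \<bullet> (matrix_inv T *v x) \<le> x \<bullet> (matrix_inv S *v x)" for x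
    by (rule inv_mono[OF _ ZS(1) ZT(1) psdS le1]) (simp add: S_def S_sym)
  have QS'T: "x \<bullet> (matrix_inv S' *v x) \<le> x \<bullet> (matrix_inv T *v x)" for x
    by (rule inv_mono[OF _ ZT(1) ZS'(1) psdT le2]) (simp add: T_def S_sym)
  define K0 where "K0 = sqrt (2*pi) ^ CARD('d)"
  have K0: "0 < K0" by (simp add: K0_def)
  have "ennreal (K0 * sqrt (det T)) \<le> ennreal (K0 * sqrt (det S'))"
    unfolding K0_def ZT(3)[symmetric] ZS'(3)[symmetric]
    by (intro nn_integral_mono ennreal_leI) (use QS'T in auto)
  then have "K0 * sqrt (det T) \<le> K0 * sqrt (det S')"
    using K0 ZS'(2) by (subst (asm) ennreal_le_iff) auto
  then have sT: "sqrt (det T) \<le> sqrt (det S')" using K0 by simp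
  have dS': "det S' = a' ^ CARD('d) * det S"
    unfolding S'_def B1_def S_def by (rule scaled_S[OF c3])
  have z1: "1 \<le> a' ^ CARD('d)" using a'1 by (rule one_le_power)
  have sz: "sqrt (a' ^ CARD('d)) \<le> a' ^ CARD('d)"
  proof -
    let ?z = "a' ^ CARD('d)"
    have "1 \<le> sqrt ?z" using z1 by simp
    then have "sqrt ?z * 1 \<le> sqrt ?z * sqrt ?z" by (intro mult_left_mono) auto
    also have "sqrt ?z * sqrt ?z = ?z" using z1 by simp
    finally show ?thesis by simp
  qed
  have "sqrt (det S') \<le> a' ^ CARD('d) * sqrt (det S)"
    using mult_right_mono[OF sz, of "sqrt (det S)"] ZS(2) by (simp add: dS' real_sqrt_mult)
  with sT have sTS: "sqrt (det T) \<le> a' ^ CARD('d) * sqrt (det S)" by linarith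
  have pw: "gauss_density S x \<le> a' ^ CARD('d) * gauss_density T x" for x
  proof -
    have "gauss_density S x = 1 / (K0 * sqrt (det S)) * exp (- (x \<bullet> (matrix_inv S *v x)) / 2)"
      using gd_eq[OF ZS(2)] K0_def by simp
    also have "\<dots> \<le> 1 / (K0 * sqrt (det S)) * exp (- (x \<bullet> (matrix_inv T *v x)) / 2)"
      using QTS[of x] K0 ZS(2) by (intro mult_left_mono) auto
    also have "1 / (K0 * sqrt (det S)) \<le> a' ^ CARD('d) / (K0 * sqrt (det T))"
    proof -
      have p1: "0 < K0 * sqrt (det S)" "0 < K0 * sqrt (det T)" using K0 ZS(2) ZT(2) by auto
      have "1 / (K0 * sqrt (det S)) = a' ^ CARD('d) / (a' ^ CARD('d) * (K0 * sqrt (det S)))"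
        using z1 c3 by simp
      also have "\<dots> \<le> a' ^ CARD('d) / (K0 * sqrt (det T))"
      proof (rule divide_left_mono)
        show "K0 * sqrt (det T) \<le> a' ^ CARD('d) * (K0 * sqrt (det S))"
          using mult_left_mono[OF sTS, of K0] K0 by (simp add: mult_ac)
        show "0 \<le> a' ^ CARD('d)" using z1 by simp
        show "0 < a' ^ CARD('d) * (K0 * sqrt (det S)) * (K0 * sqrt (det T))"
          using p1 z1 by simp
      qed
      finally show ?thesis .
    qed
    also have "a' ^ CARD('d) / (K0 * sqrt (det T)) * exp (- (x \<bullet> (matrix_inv T *v x)) / 2)
        = a' ^ CARD('d) * gauss_density T x"
      using gd_eq[OF ZT(2)] K0_def by simp
    finally show ?thesis by simp
  qed
  then show "\<And>x. gauss_density (B ** transpose B + mat 1) x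
          \<le> (1+2*\<theta>)^CARD('d) * gauss_density (B0 ** transpose B0 + mat (1+\<theta>)) x"
    unfolding S_def T_def a'_def .
  have iS: "(\<integral>\<^sup>+x. ennreal (gauss_density S x) \<partial>lborel) = 1" by (rule gd_int[OF c1 S_def])
  have iT: "(\<integral>\<^sup>+x. ennreal (a' ^ CARD('d) * gauss_density T x) \<partial>lborel) = ennreal (a' ^ CARD('d))"
  proof -
    have "(\<integral>\<^sup>+x. ennreal (a' ^ CARD('d) * gauss_density T x) \<partial>lborel)
        = (\<integral>\<^sup>+x. ennreal (a' ^ CARD('d)) * ennreal (gauss_density T x) \<partial>lborel)"
      using c3 by (simp add: ennreal_mult gd_nonneg)
    also have "\<dots> = ennreal (a' ^ CARD('d)) * (\<integral>\<^sup>+x. ennreal (gauss_density T x) \<partial>lborel)"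
      by (rule nn_integral_cmult) (use gd_meas in measurable)
    also have "\<dots> = ennreal (a' ^ CARD('d))" by (simp add: gd_int[OF c2 T_def])
    finally show ?thesis .
  qed
  have "(\<integral>\<^sup>+x. ennreal (a' ^ CARD('d) * gauss_density T x - gauss_density S x) \<partial>lborel)
      = (\<integral>\<^sup>+x. ennreal (a' ^ CARD('d) * gauss_density T x) - ennreal (gauss_density S x) \<partial>lborel)"
    by (simp add: ennreal_minus gd_nonneg)
  also have "\<dots> = ennreal (a' ^ CARD('d)) - 1"
  proof -
    have m1: "(\<lambda>x. ennreal (gauss_density S x)) \<in> borel_measurable borel"
      using gd_meas[of S] by measurable
    have m2: "(\<lambda>x. ennreal (a' ^ CARD('d) * gauss_density T x)) \<in> borel_measurable borel"
      using gd_meas[of T] by measurable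
    show ?thesis
      by (subst nn_integral_diff) (use m1 m2 pw iS iT in \<open>auto intro: ennreal_leI\<close>)
  qed
  also have "\<dots> = ennreal (a' ^ CARD('d) - 1)" using ennreal_minus[of 1 "a' ^ CARD('d)"] by simp
  finally show "(\<integral>\<^sup>+x. ennreal ((1+2*\<theta>)^CARD('d) * gauss_density (B0 ** transpose B0 + mat (1+\<theta>)) x
            - gauss_density (B ** transpose B + mat 1) x) \<partial>lborel) = ennreal ((1+2*\<theta>)^CARD('d) - 1)"
    unfolding S_def T_def a'_def .
qed



lemma arith_pow:
  fixes m :: real and d :: nat
  assumes m: "m \<ge> 1" and d: "d \<ge> 1"
  shows "(1 + 2 * (1 / (4 * m * real d))) ^ d - 1 \<le> 1 / m"
proof -
  define x where "x = 1 / (2 * m * real d)"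
  have d1: "1 \<le> real d" using d by simp
  have md: "1 \<le> m * real d" using mult_mono[OF m d1] m by simp
  have x0: "0 < x" using m d by (simp add: x_def)
  have dx: "real d * x = 1 / (2 * m)" using d m by (simp add: x_def)
  have x1: "x \<le> 1" unfolding x_def using md by simp
  have e: "2 * (1 / (4 * m * real d)) = x" by (simp add: x_def)
  have bern: "1 + real d * (- x) \<le> (1 + - x) ^ d"
    by (rule Bernoulli_inequality) (use x1 in simp)
  have pos: "0 < 1 - real d * x" using dx m by simp
  have prod: "(1 + x) ^ d * (1 - x) ^ d \<le> 1"
  proof -
    have "(1 + x) ^ d * (1 - x) ^ d = (1 - x * x) ^ d" by (simp add: power_mult_distrib[symmetric] algebra_simps)
    also have "\<dots> \<le> 1" using x0 x1 by (intro power_le_one) (auto simp: mult_le_one)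
    finally show ?thesis .
  qed
  have "(1 + x) ^ d * (1 - real d * x) \<le> (1 + x) ^ d * (1 - x) ^ d"
    using bern x0 by (intro mult_left_mono) auto
  with prod have "(1 + x) ^ d * (1 - real d * x) \<le> 1" by linarith
  then have "(1 + x) ^ d \<le> 1 / (1 - real d * x)" using pos by (simp add: field_simps)
  also have "\<dots> = 2 * m / (2 * m - 1)" unfolding dx using m by (simp add: field_simps)
  also have "\<dots> \<le> 1 + 1 / m" using m by (simp add: field_simps)
  finally show ?thesis unfolding e by simp
qed

lemma arith_grid:
  fixes m d r D :: real
  assumes m: "m \<ge> 1" and d: "d \<ge> 1" and r: "r \<ge> 1" and D: "D > 0"
  shows "8 * m * d\<^sup>2 * r * D * (2 * D + 3) + 2 \<le> (24 * m * d * r * (D\<^sup>2 + 1)) ^ 4"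
proof -
  define P where "P = m * d * r"
  define E where "E = D\<^sup>2 + 1"
  have mr: "1 \<le> m * r" using mult_mono[OF m r] m by simp
  have P1: "d \<le> P" unfolding P_def using mult_left_mono[OF mr, of d] d by (simp add: mult_ac)
  have Pge: "1 \<le> P" using P1 d by simp
  have E1: "1 \<le> E" by (simp add: E_def)
  have sq: "0 \<le> (D - 3/4) * (D - 3/4)" by simp
  have D1: "D * (2 * D + 3) \<le> 4 * E" unfolding E_def power2_eq_square using sq
    by (simp add: algebra_simps)
  have "8 * m * d\<^sup>2 * r * D * (2 * D + 3) = (8 * d * P) * (D * (2 * D + 3))"
    by (simp add: P_def power2_eq_square mult_ac)
  also have "\<dots> \<le> (8 * d * P) * (4 * E)" using D1 d Pge by (intro mult_left_mono) auto
  also have "\<dots> = 32 * (d * (P * E))" by (simp add: mult_ac)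
  also have "\<dots> \<le> 32 * (P * (P * E))" using P1 Pge E1 by (intro mult_left_mono mult_right_mono) auto
  also have "\<dots> \<le> 32 * ((P * E) * (P * E))" using Pge E1
    by (intro mult_left_mono) (auto simp: mult_ac intro!: mult_left_mono[of 1 E "P*P", simplified])
  finally have A: "8 * m * d\<^sup>2 * r * D * (2 * D + 3) \<le> 32 * ((P * E) * (P * E))" .
  define Y where "Y = P * E"
  have Y1: "1 \<le> Y" unfolding Y_def using mult_mono[OF Pge E1] Pge by simp
  have YY: "1 \<le> Y * Y" using mult_mono[OF Y1 Y1] Y1 by simp
  have Y4: "Y * Y \<le> (Y * Y) * (Y * Y)" using mult_left_mono[OF YY, of "Y*Y"] YY by simp
  have "(24 * m * d * r * (D\<^sup>2 + 1)) ^ 4 = 331776 * ((Y * Y) * (Y * Y))"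
  proof -
    have "24 * m * d * r * (D\<^sup>2 + 1) = 24 * Y" by (simp add: Y_def P_def E_def mult_ac)
    then show ?thesis by (simp add: power4_eq_xxxx)
  qed
  moreover have "32 * (Y * Y) + 2 \<le> 331776 * ((Y * Y) * (Y * Y))" using YY Y4 by linarith
  ultimately show ?thesis using A unfolding Y_def by linarith
qed



theorem mainTheorem9:
  fixes D :: real and m :: nat
  assumes "CARD('r) < CARD('d)"
    and "D > 0" and "m \<ge> 1"
  shows "bracketing_number (gauss_family {B :: real^'r^'d. onorm (\<lambda>x. B *v x) \<le> D}) (1 / real m) < \<infinity>
     \<and> ln (real (the_enat (bracketing_number
            (gauss_family {B :: real^'r^'d. onorm (\<lambda>x. B *v x) \<le> D}) (1 / real m))))
        \<le> 4 * real CARD('d) * real CARD('r)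
            * ln (24 * real m * real CARD('d) * real CARD('r) * (D^2 + 1))"
proof -
  note Dp = \<open>D > 0\<close>
  let ?P = "gauss_family {B :: real^'r^'d. onorm (\<lambda>x. B *v x) \<le> D}"
  have r1: "1 \<le> CARD('r)" by (simp add: Suc_leI)
  have d1: "1 \<le> CARD('d)" by (simp add: Suc_leI)
  have m1: "1 \<le> real m" using \<open>m \<ge> 1\<close> by simp
  define \<theta> where "\<theta> = 1 / (4 * real m * real CARD('d))"
  define \<delta> where "\<delta> = \<theta> / (2 * D + 3)"
  define h where "h = \<delta> / (real CARD('r) * real CARD('d))"
  have tpos: "0 < \<theta>" using m1 d1 by (simp add: \<theta>_def)
  have t1: "\<theta> \<le> 1"
  proof -
    have "1 \<le> 4 * real m * real CARD('d)" using m1 d1 mult_mono[of 1 "4 * real m" 1 "real CARD('d)"] by simp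
    then show ?thesis unfolding \<theta>_def by simp
  qed
  have dpos: "0 < \<delta>" using tpos Dp by (simp add: \<delta>_def)
  have dt: "\<delta> * (2 * D + 3) \<le> \<theta>" using Dp by (simp add: \<delta>_def)
  have d_le: "\<delta> \<le> 1"
  proof -
    have "\<delta> \<le> \<theta>" unfolding \<delta>_def using tpos Dp by (simp add: divide_le_eq)
    then show ?thesis using t1 by simp
  qed
  have hpos: "0 < h" using dpos r1 d1 by (simp add: h_def)
  have rdh: "real CARD('r) * real CARD('d) * h = \<delta>" using r1 d1 by (simp add: h_def)
  define Z where "Z = {\<lfloor>- D / h\<rfloor> .. \<lfloor>D / h\<rfloor>}"
  define Y where "Y = (\<lambda>k::int. h * of_int k) ` Z"
  define K where "K = PiE (UNIV :: ('d \<times> 'r) set) (\<lambda>_. Y)"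
  define Bm where "Bm = (\<lambda>k :: 'd \<times> 'r \<Rightarrow> real. (\<chi> i j. k (i, j)) :: real^'r^'d)"
  define qf where "qf = (\<lambda>k x. (1 + 2 * \<theta>) ^ CARD('d) * gauss_density (Bm k ** transpose (Bm k) + mat (1 + \<theta>)) x)"
  define N where "N = qf ` K"
  have finY: "finite Y" unfolding Y_def Z_def by simp
  have finK: "finite K" unfolding K_def using finY by (intro finite_PiE) auto
  have finN: "finite N" unfolding N_def using finK by simp
  have eps: "(1 + 2 * \<theta>) ^ CARD('d) - 1 \<le> 1 / real m"
    using arith_pow[OF m1 d1] by (simp add: \<theta>_def)
  have brk: "is_bracketing ?P (1 / real m) N"
    unfolding is_bracketing_def
  proof (intro conjI)
    show "finite N" by (rule finN)
  next
    show "\<forall>q\<in>N. q \<in> borel_measurable lborel \<and> (\<forall>x. 0 \<le> q x)"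
    proof
    fix q assume "q \<in> N"
    then obtain k where q: "q = qf k" unfolding N_def by auto
    show "q \<in> borel_measurable lborel \<and> (\<forall>x. 0 \<le> q x)"
    proof
      show "q \<in> borel_measurable lborel"
        unfolding q qf_def using gd_meas by measurable
      show "\<forall>x. 0 \<le> q x" unfolding q qf_def using tpos by (simp add: gd_nonneg)
    qed
    qed
  next
    show "\<forall>p\<in>?P. \<exists>q\<in>N. (\<forall>x. p x \<le> q x) \<and> (\<integral>\<^sup>+ x. ennreal (q x - p x) \<partial>lborel) \<le> ennreal (1 / real m)"
    proof
    fix p assume "p \<in> ?P"
    then obtain B :: "real^'r^'d" where onB: "onorm (\<lambda>x. B *v x) \<le> D"
      and p: "p = gauss_density (B ** transpose B + mat 1)"
      unfolding gauss_family_def by auto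
    define k where "k = (\<lambda>(i, j). h * of_int \<lfloor>B $ i $ j / h\<rfloor>)"
    have kK: "k \<in> K"
      unfolding K_def
    proof (rule PiE_I)
      fix x :: "'d \<times> 'r"
      obtain i j where x: "x = (i, j)" by (cases x)
      have eb: "\<bar>B $ i $ j\<bar> \<le> D" by (rule entry_bound[OF onB])
      have "\<lfloor>- D / h\<rfloor> \<le> \<lfloor>B $ i $ j / h\<rfloor>" using eb hpos by (intro floor_mono divide_right_mono) auto
      moreover have "\<lfloor>B $ i $ j / h\<rfloor> \<le> \<lfloor>D / h\<rfloor>" using eb hpos by (intro floor_mono divide_right_mono) auto
      ultimately show "k x \<in> Y" unfolding Y_def Z_def k_def x by auto
    qed auto
    have ent: "\<bar>(B - Bm k) $ i $ j\<bar> \<le> h" for i j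
    proof -
      let ?t = "B $ i $ j / h"
      have "(B - Bm k) $ i $ j = B $ i $ j - h * of_int \<lfloor>?t\<rfloor>" by (simp add: Bm_def k_def)
      moreover have "h * of_int \<lfloor>?t\<rfloor> \<le> h * ?t" using hpos by (intro mult_left_mono) auto
      moreover have "h * ?t < h * (of_int \<lfloor>?t\<rfloor> + 1)" using hpos by (intro mult_strict_left_mono) auto
      moreover have "h * ?t = B $ i $ j" using hpos by simp
      ultimately show ?thesis using hpos by (simp add: algebra_simps)
    qed
    have diff: "norm (transpose (B - Bm k) *v y) \<le> \<delta> * norm y" for y
      using small_transpose_bound[of "B - Bm k" h y, OF ent] rdh by simp
    note bo = bracket_one[OF onB Dp diff dpos[THEN less_imp_le] d_le dt]
    show "\<exists>q\<in>N. (\<forall>x. p x \<le> q x) \<and> (\<integral>\<^sup>+ x. ennreal (q x - p x) \<partial>lborel) \<le> ennreal (1 / real m)"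
    proof (intro bexI conjI allI)
      show "qf k \<in> N" unfolding N_def using kK by simp
      show "p x \<le> qf k x" for x unfolding p qf_def by (rule bo(1))
      show "(\<integral>\<^sup>+ x. ennreal (qf k x - p x) \<partial>lborel) \<le> ennreal (1 / real m)"
        unfolding p qf_def bo(2) using eps by (simp add: ennreal_leI)
    qed
    qed
  qed
  have cardK: "card K = card Y ^ (CARD('d) * CARD('r))"
    unfolding K_def using card_PiE[of "UNIV :: ('d \<times> 'r) set" "\<lambda>_. Y"]
    by (simp add: UNIV_Times_UNIV[symmetric] card_cartesian_product del: UNIV_Times_UNIV)
  have cardN: "card N \<le> card Y ^ (CARD('d) * CARD('r))"
    unfolding N_def cardK[symmetric] using finK by (rule card_image_le)
  have Yne: "0 < card Y"
  proof -
    have "0 < D / h" using Dp hpos by simp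
    then have "0 \<in> Z" unfolding Z_def by auto
    then have "Y \<noteq> {}" unfolding Y_def by auto
    then show ?thesis using finY by (simp add: card_gt_0_iff)
  qed
  have cardY: "real (card Y) \<le> 8 * real m * (real CARD('d))\<^sup>2 * real CARD('r) * D * (2 * D + 3) + 2"
  proof -
    have "card Y \<le> card Z" unfolding Y_def by (rule card_image_le) (simp add: Z_def)
    also have "card Z = nat (\<lfloor>D / h\<rfloor> - \<lfloor>- D / h\<rfloor> + 1)" by (simp add: Z_def)
    finally have c1: "real (card Y) \<le> real (nat (\<lfloor>D / h\<rfloor> - \<lfloor>- D / h\<rfloor> + 1))" by simp
    have f1: "real_of_int \<lfloor>D / h\<rfloor> \<le> D / h" by simp
    have f2: "- D / h < real_of_int \<lfloor>- D / h\<rfloor> + 1" by (rule real_of_int_floor_add_one_gt)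
    have fm: "\<lfloor>- D / h\<rfloor> \<le> \<lfloor>D / h\<rfloor>" using Dp hpos by (intro floor_mono divide_right_mono) auto
    have e: "real (nat (\<lfloor>D / h\<rfloor> - \<lfloor>- D / h\<rfloor> + 1)) = real_of_int \<lfloor>D / h\<rfloor> - real_of_int \<lfloor>- D / h\<rfloor> + 1"
      using fm by simp
    have e2: "- D / h = - (D / h)" "2 * D / h = 2 * (D / h)" by simp_all
    have "real (nat (\<lfloor>D / h\<rfloor> - \<lfloor>- D / h\<rfloor> + 1)) \<le> 2 * D / h + 2"
      using f1 f2 e e2 by linarith
    also have "2 * D / h = 8 * real m * (real CARD('d))\<^sup>2 * real CARD('r) * D * (2 * D + 3)"
      using Dp m1 d1 r1 by (simp add: h_def \<delta>_def \<theta>_def field_simps power2_eq_square)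
    finally show ?thesis using c1 by simp
  qed
  define X where "X = 24 * real m * real CARD('d) * real CARD('r) * (D^2 + 1)"
  have cY4: "real (card Y) \<le> X ^ 4"
    using cardY arith_grid[OF m1, of "real CARD('d)" "real CARD('r)" D] d1 r1 Dp by (simp add: X_def)
  have X1: "1 \<le> X"
  proof -
    have "1 \<le> real (card Y)" using Yne by simp
    then have "1 \<le> X ^ 4" using cY4 by simp
    moreover have "0 \<le> X" unfolding X_def by simp
    ultimately show ?thesis by (metis not_le power_less_one_iff zero_less_numeral)
  qed
  define bn where "bn = bracketing_number ?P (1 / real m)"
  have bnle: "bn \<le> enat (card N)"
    unfolding bn_def bracketing_number_def using brk by (intro Inf_lower) auto
  then obtain n where bn: "bn = enat n" and nle: "n \<le> card N"
    by (cases bn) auto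
  have fin: "bn < \<infinity>" using bn by simp
  have "ln (real n) \<le> 4 * real CARD('d) * real CARD('r) * ln X"
  proof (cases "n = 0")
    case True
    then show ?thesis using X1 by simp
  next
    case False
    have "ln (real n) \<le> ln (real (card Y ^ (CARD('d) * CARD('r))))"
      using False nle cardN Yne by (intro ln_le_cancel_iff[THEN iffD2]) auto
    also have "\<dots> = real (CARD('d) * CARD('r)) * ln (real (card Y))"
      using Yne by (simp add: ln_realpow)
    also have "ln (real (card Y)) \<le> ln (X ^ 4)"
      using Yne cY4 by (intro ln_le_cancel_iff[THEN iffD2]) auto
    also have "ln (X ^ 4) = 4 * ln X" using X1 by (simp add: ln_realpow)
    finally show ?thesis by (simp add: mult_ac)
  qed
  then show ?thesis using fin unfolding bn_def[symmetric] bn X_def by simp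
qed


end
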